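(* Let $(Q,\cdot)$ be a Ward quasigroup with $xx=e$ for all $x\in Q$, and let $\mathrm{ret}(Q,\cdot,e)=(Q,\circ)$ denote the group with $x\circ y=x\cdot(e\cdot y)$. (a) If $(Q,\cdot,\diamond)$ is a double magma for some magma $(Q,\diamond)$ having a unit $1$ (i.e. $1\diamond x=x\diamond 1=x$ for all $x$), then $x\diamond y=x\cdot(e\cdot y)$ for all $x,y$ (so $(Q,\diamond)=\mathrm{ret}(Q,\cdot,e)$) and $(Q,\cdot)$ is medial. (b) If $(Q,\cdot)$ is medial and $(Q,\circ,\star)$ is a double magma for some left cancellative magma $(Q,\star)$ which is unipotent (i.e. $x\star x=y\star y$ for all $x,y$) and contains a right unit $r$ (i.e. $x\star r=x$ for all $x$), then the operations $\cdot$ and $\star$ coincide.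
   Context: A Ward quasigroup is a quasigroup $(Q,\cdot)$ satisfying $(xz)(yz)=xy$ for all $x,y,z$; there is $e$ with $xx=e$ for all $x$, and $x\circ y=x\cdot(e\cdot y)$ defines a group with identity $e$. A triple $(Q,\ast,\star)$ is a double magma if $(x\ast y)\star(z\ast w)=(x\star z)\ast(y\star w)$ for all $x,y,z,w$. A magma is medial if $(xy)(zw)=(xz)(yw)$ for all $x,y,z,w$; left cancellative if $ax=ay$ implies $x=y$. *)

theory Defs
  imports Main
begin

definition quasigroup :: "('a \<Rightarrow> 'a \<Rightarrow> 'a) \<Rightarrow> bool" where
  "quasigroup m \<longleftrightarrow> (\<forall>a b. (\<exists>!x. m a x = b) \<and> (\<exists>!y. m y a = b))"

definition ward_quasigroup :: "('a \<Rightarrow> 'a \<Rightarrow> 'a) \<Rightarrow> bool" where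
  "ward_quasigroup m \<longleftrightarrow> quasigroup m \<and> (\<forall>x y z. m (m x z) (m y z) = m x y)"

definition double_magma :: "('a \<Rightarrow> 'a \<Rightarrow> 'a) \<Rightarrow> ('a \<Rightarrow> 'a \<Rightarrow> 'a) \<Rightarrow> bool" where
  "double_magma ast star \<longleftrightarrow>
     (\<forall>x y z w. star (ast x y) (ast z w) = ast (star x z) (star y w))"

definition medial :: "('a \<Rightarrow> 'a \<Rightarrow> 'a) \<Rightarrow> bool" where
  "medial m \<longleftrightarrow> (\<forall>x y z w. m (m x y) (m z w) = m (m x z) (m y w))"

definition left_cancellative :: "('a \<Rightarrow> 'a \<Rightarrow> 'a) \<Rightarrow> bool" where
  "left_cancellative m \<longleftrightarrow> (\<forall>a x y. m a x = m a y \<longrightarrow> x = y)"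

definition unipotent :: "('a \<Rightarrow> 'a \<Rightarrow> 'a) \<Rightarrow> bool" where
  "unipotent m \<longleftrightarrow> (\<forall>x y. m x x = m y y)"

definition ret :: "('a \<Rightarrow> 'a \<Rightarrow> 'a) \<Rightarrow> 'a \<Rightarrow> 'a \<Rightarrow> 'a \<Rightarrow> 'a" where
  "ret m e x y = m x (m e y)"

end

theory Submission
  imports Defs
begin

theorem theorem3p5:
  fixes dot :: "'a \<Rightarrow> 'a \<Rightarrow> 'a" and e :: 'a
  assumes ward: "ward_quasigroup dot"
    and e_def: "\<forall>x. dot x x = e"
  shows "(\<forall>(diam :: 'a \<Rightarrow> 'a \<Rightarrow> 'a) u.
            double_magma dot diam \<and> (\<forall>x. diam u x = x \<and> diam x u = x)
            \<longrightarrow> (\<forall>x y. diam x y = ret dot e x y) \<and> medial dot)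
       \<and> (\<forall>(star :: 'a \<Rightarrow> 'a \<Rightarrow> 'a) r.
            medial dot \<and> double_magma (ret dot e) star \<and> left_cancellative star
            \<and> unipotent star \<and> (\<forall>x. star x r = x)
            \<longrightarrow> (\<forall>x y. star x y = dot x y))"
proof -
  have W: "\<And>x y z. dot (dot x z) (dot y z) = dot x y" using ward unfolding ward_quasigroup_def by blast
  have Q: "\<And>a b. \<exists>!x. dot a x = b" "\<And>a b. \<exists>!y. dot y a = b"
    using ward unfolding ward_quasigroup_def quasigroup_def by blast+
  have E: "\<And>x. dot x x = e" using e_def by blast
  have lc: "\<And>a x y. dot a x = dot a y \<Longrightarrow> x = y" using Q(1) by blast
  have surj: "\<And>a. \<exists>x z. a = dot x z" using Q(1) by metis
  have re: "\<And>a. dot a e = a"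
  proof -
    fix a obtain x z where a: "a = dot x z" using surj by blast
    have "dot (dot x z) (dot z z) = dot x z" by (rule W)
    then show "dot a e = a" using a E by simp
  qed
  have sw: "\<And>x y. dot e (dot y x) = dot x y"
  proof -
    fix x y have "dot (dot x x) (dot y x) = dot x y" by (rule W)
    then show "dot e (dot y x) = dot x y" using E by simp
  qed
  have ii: "\<And>a. dot e (dot e a) = a"
  proof -
    fix a obtain x z where a: "a = dot x z" using surj by blast
    show "dot e (dot e a) = a" by (simp add: a sw)
  qed
  have rlc: "\<And>a b c. ret dot e a b = ret dot e a c \<Longrightarrow> b = c"
    unfolding ret_def by (metis lc ii)
  show ?thesis
  proof (intro conjI allI impI)
    fix diam :: "'a \<Rightarrow> 'a \<Rightarrow> 'a" and u
    assume h: "double_magma dot diam \<and> (\<forall>x. diam u x = x \<and> diam x u = x)"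
    have D: "\<And>x y z w. diam (dot x y) (dot z w) = dot (diam x z) (diam y w)"
      using h unfolding double_magma_def by blast
    have U: "\<And>x. diam u x = x" "\<And>x. diam x u = x" using h by auto
    have el: "\<And>a. diam e a = a"
    proof -
      fix a obtain z w where a: "a = dot z w" using surj by blast
      have "diam (dot u u) (dot z w) = dot (diam u z) (diam u w)" by (rule D)
      then show "diam e a = a" using a E U by simp
    qed
    have ue: "u = e" using el U by metis
    have er: "\<And>a. diam a e = a" using U ue by simp
    have dd: "\<And>x y. diam x y = dot x (dot e y)"
    proof -
      fix x y
      have "diam (dot x e) (dot e (dot e y)) = dot (diam x e) (diam e (dot e y))" by (rule D)
      then show "diam x y = dot x (dot e y)" using re ii er el by simp
    qed
    have comm: "\<And>a b. diam a b = diam b a"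
    proof -
      fix a b
      have "diam (dot e (dot e a)) (dot b e) = dot (diam e b) (diam (dot e a) e)" by (rule D)
      then have "diam a b = dot b (dot e a)" using ii re el er by simp
      then show "diam a b = diam b a" using dd by simp
    qed
    show "\<And>x y. diam x y = ret dot e x y" using dd ret_def by metis
    show "medial dot" unfolding medial_def
    proof (intro allI)
      fix x y z w
      have "dot (dot x y) (dot z w) = diam (dot x y) (dot w z)" using dd sw by metis
      also have "\<dots> = dot (diam x w) (diam y z)" by (rule D)
      also have "\<dots> = dot (diam x w) (diam z y)" using comm by metis
      also have "\<dots> = diam (dot x z) (dot w y)" by (rule D[symmetric])
      also have "\<dots> = dot (dot x z) (dot y w)" using dd sw by metis
      finally show "dot (dot x y) (dot z w) = dot (dot x z) (dot y w)" .
    qed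
  next
    fix star :: "'a \<Rightarrow> 'a \<Rightarrow> 'a" and r
    assume h: "medial dot \<and> double_magma (ret dot e) star \<and> left_cancellative star
            \<and> unipotent star \<and> (\<forall>x. star x r = x)"
    let ?o = "ret dot e"
    have D: "\<And>x y z w. star (?o x y) (?o z w) = ?o (star x z) (star y w)"
      using h unfolding double_magma_def by blast
    have LC: "\<And>a x y. star a x = star a y \<Longrightarrow> x = y" using h unfolding left_cancellative_def by blast
    have UP: "\<And>x y. star x x = star y y" using h unfolding unipotent_def by blast
    have R: "\<And>x. star x r = x" using h by blast
    have oe: "\<And>a. ?o a e = a" unfolding ret_def using E re by simp
    have eo: "\<And>a. ?o e a = a" unfolding ret_def using ii by simp
    have c: "\<And>x. star x x = e"
    proof -
      fix x
      have "star (?o e e) (?o e e) = ?o (star e e) (star e e)" by (rule D)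
      then have "?o (star e e) e = ?o (star e e) (star e e)" using oe by simp
      then have "star e e = e" using rlc by metis
      then show "star x x = e" using UP by metis
    qed
    have rr: "r = e"
    proof -
      have "star (?o e e) (?o r r) = ?o (star e r) (star e r)" by (rule D)
      then have "star e (?o r r) = star e r" using oe R by simp
      then have "?o r r = r" using LC by blast
      then have "?o r r = ?o r e" using oe by simp
      then show ?thesis using rlc by blast
    qed
    have Re: "\<And>x. star x e = x" using R rr by simp
    have form: "\<And>x w. star x w = ?o x (star e w)"
    proof -
      fix x w
      have "star (?o x e) (?o e w) = ?o (star x e) (star e w)" by (rule D)
      then show "star x w = ?o x (star e w)" using oe eo Re by simp
    qed
    have ew: "\<And>w. star e w = dot e w"
    proof -
      fix w
      have "?o w (star e w) = e" using form c by metis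
      moreover have "?o w (dot e w) = e" unfolding ret_def using ii E by simp
      ultimately show "star e w = dot e w" using rlc by metis
    qed
    show "\<And>x y. star x y = dot x y"
      using form ew ii unfolding ret_def by simp
  qed
qed

end
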